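(* The category $\mathsf{DiGp}$ of digroups does not satisfy the (Huq=Smith) condition: there exist a digroup $X$ and congruences $R,S$ on $X$ such that $[I_R,I_S]=0$ but $[R,S]\neq 0$.
   Context: A digroup is a triple $(G,*,\circ)$ where $(G,* )$, $(G,\circ)$ are groups on the same set $G$ with the same identity $1$; morphisms are maps that are homomorphisms for both operations; products are computed componentwise. A congruence on a digroup $X$ is an equivalence relation $R\subseteq X\times X$ that is a sub-digroup of $X\times X$; $I_R=\{x\in X: x\,R\,1\}$, a sub-digroup of $X$. For sub-digroups $U,V$ of $X$, write $[U,V]=0$ (Huq commutation) if there exists a digroup morphism $\varphi\colon U\times V\to X$ with $\varphi(u,1)=u$ and $\varphi(1,v)=v$ for all $u\in U,v\in V$. For congruences $R,S$ on $X$, let $R\times_X S=\{(x,y,z)\in X^3: x\,R\,y,\ y\,S\,z\}$ (a sub-digroup of $X^3$); write $[R,S]=0$ (Smith commutation) if there exists a digroup morphism $p\colon R\times_X S\to X$ with $p(x,y,y)=x$ whenever $xRy$ and $p(y,y,z)=z$ whenever $ySz$. The category satisfies (Huq=Smith) if for every object $X$ and all congruences $R,S$ on $X$, $[I_R,I_S]=0$ implies $[R,S]=0$. *)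

theory Defs
  imports "HOL-Algebra.Group"
begin

record 'a dgr =
  dcar :: "'a set"
  op1 :: "'a \<Rightarrow> 'a \<Rightarrow> 'a"
  op2 :: "'a \<Rightarrow> 'a \<Rightarrow> 'a"
  dunit :: 'a

definition grp1 :: "'a dgr \<Rightarrow> 'a monoid" where
  "grp1 X = \<lparr>carrier = dcar X, mult = op1 X, one = dunit X\<rparr>"

definition grp2 :: "'a dgr \<Rightarrow> 'a monoid" where
  "grp2 X = \<lparr>carrier = dcar X, mult = op2 X, one = dunit X\<rparr>"

definition is_digroup :: "'a dgr \<Rightarrow> bool" where
  "is_digroup X \<longleftrightarrow> group (grp1 X) \<and> group (grp2 X)"

definition sub_digroup :: "'a set \<Rightarrow> 'a dgr \<Rightarrow> bool" where
  "sub_digroup U X \<longleftrightarrow> subgroup U (grp1 X) \<and> subgroup U (grp2 X)"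

definition dsub :: "'a dgr \<Rightarrow> 'a set \<Rightarrow> 'a dgr" where
  "dsub X U = \<lparr>dcar = U, op1 = op1 X, op2 = op2 X, dunit = dunit X\<rparr>"

definition dprod :: "'a dgr \<Rightarrow> 'b dgr \<Rightarrow> ('a \<times> 'b) dgr" where
  "dprod X Y = \<lparr>dcar = dcar X \<times> dcar Y,
     op1 = (\<lambda>(a, b) (c, d). (op1 X a c, op1 Y b d)),
     op2 = (\<lambda>(a, b) (c, d). (op2 X a c, op2 Y b d)),
     dunit = (dunit X, dunit Y)\<rparr>"

definition dhom :: "'a dgr \<Rightarrow> 'b dgr \<Rightarrow> ('a \<Rightarrow> 'b) \<Rightarrow> bool" where
  "dhom X Y f \<longleftrightarrow> f \<in> dcar X \<rightarrow> dcar Y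
     \<and> (\<forall>x\<in>dcar X. \<forall>y\<in>dcar X. f (op1 X x y) = op1 Y (f x) (f y))
     \<and> (\<forall>x\<in>dcar X. \<forall>y\<in>dcar X. f (op2 X x y) = op2 Y (f x) (f y))"

definition dcongruence :: "'a dgr \<Rightarrow> ('a \<times> 'a) set \<Rightarrow> bool" where
  "dcongruence X R \<longleftrightarrow> equiv (dcar X) R \<and> sub_digroup R (dprod X X)"

definition normal_part :: "'a dgr \<Rightarrow> ('a \<times> 'a) set \<Rightarrow> 'a set" where
  "normal_part X R = {x \<in> dcar X. (x, dunit X) \<in> R}"

definition huq_commute :: "'a dgr \<Rightarrow> 'a set \<Rightarrow> 'a set \<Rightarrow> bool" where
  "huq_commute X U V \<longleftrightarrow> (\<exists>\<phi>. dhom (dprod (dsub X U) (dsub X V)) X \<phi>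
      \<and> (\<forall>u\<in>U. \<phi> (u, dunit X) = u) \<and> (\<forall>v\<in>V. \<phi> (dunit X, v) = v))"

text \<open>R \<times>_X S, with triples (x,y,z) encoded as (x,(y,z)), inside X \<times> (X \<times> X).\<close>
definition rel_pullback :: "'a dgr \<Rightarrow> ('a \<times> 'a) set \<Rightarrow> ('a \<times> 'a) set \<Rightarrow> ('a \<times> 'a \<times> 'a) set" where
  "rel_pullback X R S = {(x, y, z). x \<in> dcar X \<and> y \<in> dcar X \<and> z \<in> dcar X
      \<and> (x, y) \<in> R \<and> (y, z) \<in> S}"

definition smith_commute :: "'a dgr \<Rightarrow> ('a \<times> 'a) set \<Rightarrow> ('a \<times> 'a) set \<Rightarrow> bool" where
  "smith_commute X R S \<longleftrightarrow> (\<exists>p. dhom (dsub (dprod X (dprod X X)) (rel_pullback X R S)) X p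
      \<and> (\<forall>x y. (x, y) \<in> R \<longrightarrow> p (x, y, y) = x)
      \<and> (\<forall>y z. (y, z) \<in> S \<longrightarrow> p (y, y, z) = z))"

end

theory Submission
  imports Defs
begin

definition sg :: "nat \<Rightarrow> nat" where
  "sg a = (if a = 5 then 7 else if a = 7 then 5 else a)"

definition XX :: "nat dgr" where
  "XX = \<lparr>dcar = {..<8}, op1 = (\<lambda>a b. (a + b) mod 8),
         op2 = (\<lambda>a b. sg ((sg a + sg b) mod 8)), dunit = 0\<rparr>"

definition RR :: "(nat \<times> nat) set" where
  "RR = {(x, y). x < 8 \<and> y < 8 \<and> (even x \<longleftrightarrow> even y)}"

lemma sg_sg[simp]: "sg (sg a) = a" by (simp add: sg_def)
lemma sg_lt[simp]: "sg a < 8 \<longleftrightarrow> a < 8" by (auto simp: sg_def)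
lemma sg_gt: "8 < sg a \<longleftrightarrow> 8 < a" by (auto simp: sg_def)
lemma sg_even[simp]: "even (sg a) \<longleftrightarrow> even a" by (auto simp: sg_def)
lemma sg_ev: "even a \<Longrightarrow> sg a = a" by (auto simp: sg_def)
lemma sg_0[simp]: "sg 0 = 0" by (simp add: sg_def)

lemma even_mod8[simp]: "even ((n::nat) mod 8) \<longleftrightarrow> even n"
  by (metis dvd_mod_iff even_numeral)

lemma XX_simps[simp]: "dcar XX = {..<8}" "op1 XX = (\<lambda>a b. (a + b) mod 8)"
  "op2 XX = (\<lambda>a b. sg ((sg a + sg b) mod 8))" "dunit XX = 0"
  by (simp_all add: XX_def)

lemma grp1_XX: "group (grp1 XX)"
proof (rule groupI)
  fix x assume "x \<in> carrier (grp1 XX)"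
  then have "x < 8" by (simp add: grp1_def)
  then show "\<exists>y\<in>carrier (grp1 XX). y \<otimes>\<^bsub>grp1 XX\<^esub> x = \<one>\<^bsub>grp1 XX\<^esub>"
    by (intro bexI[where x="(8 - x) mod 8"]) (auto simp: grp1_def mod_add_left_eq)
qed (auto simp: grp1_def mod_add_left_eq mod_add_right_eq add.assoc)

lemma grp2_XX: "group (grp2 XX)"
proof (rule groupI)
  fix x assume "x \<in> carrier (grp2 XX)"
  then have "x < 8" by (simp add: grp2_def)
  then show "\<exists>y\<in>carrier (grp2 XX). y \<otimes>\<^bsub>grp2 XX\<^esub> x = \<one>\<^bsub>grp2 XX\<^esub>"
  proof (intro bexI[where x="sg ((8 - sg x) mod 8)"])
    have "sg x < 8" using \<open>x < 8\<close> by simp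
    then have "8 - sg x + sg x = 8" by linarith
    then show "sg ((8 - sg x) mod 8) \<otimes>\<^bsub>grp2 XX\<^esub> x = \<one>\<^bsub>grp2 XX\<^esub>"
      by (simp add: grp2_def mod_add_left_eq)
  qed (simp add: grp2_def)
next
  fix x y z assume "x \<in> carrier (grp2 XX)" "y \<in> carrier (grp2 XX)" "z \<in> carrier (grp2 XX)"
  show "x \<otimes>\<^bsub>grp2 XX\<^esub> y \<otimes>\<^bsub>grp2 XX\<^esub> z = x \<otimes>\<^bsub>grp2 XX\<^esub> (y \<otimes>\<^bsub>grp2 XX\<^esub> z)"
    by (simp add: grp2_def mod_add_left_eq mod_add_right_eq add.assoc)
next
  fix x assume "x \<in> carrier (grp2 XX)"
  then show "\<one>\<^bsub>grp2 XX\<^esub> \<otimes>\<^bsub>grp2 XX\<^esub> x = x" by (simp add: grp2_def)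
qed (auto simp: grp2_def)

lemma grp1_dprod: "grp1 (dprod X Y) = grp1 X \<times>\<times> grp1 Y"
  by (simp add: grp1_def dprod_def DirProd_def)
lemma grp2_dprod: "grp2 (dprod X Y) = grp2 X \<times>\<times> grp2 Y"
  by (simp add: grp2_def dprod_def DirProd_def)

lemma inv1: "x < 8 \<Longrightarrow> inv\<^bsub>grp1 XX\<^esub> x = (8 - x) mod 8"
  by (rule group.inv_equality[OF grp1_XX]) (auto simp: grp1_def mod_add_left_eq)

lemma inv2: "x < 8 \<Longrightarrow> inv\<^bsub>grp2 XX\<^esub> x = sg ((8 - sg x) mod 8)"
proof (rule group.inv_equality[OF grp2_XX])
  assume "x < 8"
  then have "sg x < 8" by simp
  then have "8 - sg x + sg x = 8" by linarith
  then show "sg ((8 - sg x) mod 8) \<otimes>\<^bsub>grp2 XX\<^esub> x = \<one>\<^bsub>grp2 XX\<^esub>"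
    by (simp add: grp2_def mod_add_left_eq)
qed (auto simp: grp2_def)

lemma even_inv: "(x::nat) < 8 \<Longrightarrow> even ((8 - x) mod 8) \<longleftrightarrow> even x"
  by (simp add: even_diff_nat)

lemma RR_sub1: "subgroup RR (grp1 (dprod XX XX))"
  unfolding grp1_dprod
proof (rule group.subgroupI[OF DirProd_group[OF grp1_XX grp1_XX]])
  show "RR \<subseteq> carrier (grp1 XX \<times>\<times> grp1 XX)" by (auto simp: RR_def grp1_def)
  have "(0, 0) \<in> RR" by (simp add: RR_def)
  then show "RR \<noteq> {}" by blast
next
  fix a assume "a \<in> RR"
  then obtain x y where a: "a = (x, y)" "x < 8" "y < 8" "even x = even y" by (auto simp: RR_def)
  then show "inv\<^bsub>grp1 XX \<times>\<times> grp1 XX\<^esub> a \<in> RR"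
  proof -
    have "inv\<^bsub>grp1 XX \<times>\<times> grp1 XX\<^esub> (x, y) = (inv\<^bsub>grp1 XX\<^esub> x, inv\<^bsub>grp1 XX\<^esub> y)"
      by (rule inv_DirProd[OF grp1_XX grp1_XX]) (use a in \<open>auto simp: grp1_def\<close>)
    then show ?thesis using a by (simp add: inv1 RR_def even_inv)
  qed
next
  fix a b assume "a \<in> RR" "b \<in> RR"
  then show "a \<otimes>\<^bsub>grp1 XX \<times>\<times> grp1 XX\<^esub> b \<in> RR"
    by (auto simp: RR_def grp1_def)
qed

lemma RR_sub2: "subgroup RR (grp2 (dprod XX XX))"
  unfolding grp2_dprod
proof (rule group.subgroupI[OF DirProd_group[OF grp2_XX grp2_XX]])
  show "RR \<subseteq> carrier (grp2 XX \<times>\<times> grp2 XX)" by (auto simp: RR_def grp2_def)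
  have "(0, 0) \<in> RR" by (simp add: RR_def)
  then show "RR \<noteq> {}" by blast
next
  fix a assume "a \<in> RR"
  then obtain x y where a: "a = (x, y)" "x < 8" "y < 8" "even x = even y" by (auto simp: RR_def)
  then show "inv\<^bsub>grp2 XX \<times>\<times> grp2 XX\<^esub> a \<in> RR"
  proof -
    have "inv\<^bsub>grp2 XX \<times>\<times> grp2 XX\<^esub> (x, y) = (inv\<^bsub>grp2 XX\<^esub> x, inv\<^bsub>grp2 XX\<^esub> y)"
      by (rule inv_DirProd[OF grp2_XX grp2_XX]) (use a in \<open>auto simp: grp2_def\<close>)
    then show ?thesis using a by (simp add: inv2 RR_def even_inv sg_gt)
  qed
next
  fix a b assume "a \<in> RR" "b \<in> RR"
  then show "a \<otimes>\<^bsub>grp2 XX \<times>\<times> grp2 XX\<^esub> b \<in> RR"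
    by (auto simp: RR_def grp2_def)
qed

lemma cong_RR: "dcongruence XX RR"
  unfolding dcongruence_def sub_digroup_def
  using RR_sub1 RR_sub2
  by (auto simp: equiv_def refl_on_def sym_def trans_def RR_def)

lemma mod4: "((a + b) mod 8 + (c + d) mod 8) mod 8 = ((a + c) mod 8 + (b + d) mod 8) mod (8::nat)"
  by (simp add: mod_add_eq add_ac)

lemma np: "normal_part XX RR = {x. x < 8 \<and> even x}"
  by (auto simp: normal_part_def RR_def)

lemma huq: "huq_commute XX (normal_part XX RR) (normal_part XX RR)"
  unfolding huq_commute_def np
proof (intro exI[where x="\<lambda>(u, v). (u + v) mod 8"] conjI)
  show "dhom (dprod (dsub XX {x. x < 8 \<and> even x}) (dsub XX {x. x < 8 \<and> even x})) XX
     (\<lambda>(u, v). (u + v) mod 8)"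
    unfolding dhom_def dprod_def dsub_def
    by (auto simp: sg_ev mod4)
qed auto

lemma not_smith: "\<not> smith_commute XX RR RR"
proof
  assume "smith_commute XX RR RR"
  then obtain p where h: "dhom (dsub (dprod XX (dprod XX XX)) (rel_pullback XX RR RR)) XX p"
    and a: "\<forall>x y. (x, y) \<in> RR \<longrightarrow> p (x, y, y) = x"
    and b: "\<forall>y z. (y, z) \<in> RR \<longrightarrow> p (y, y, z) = z"
    unfolding smith_commute_def by blast
  have m1: "(7::nat, 5::nat, 5::nat) \<in> rel_pullback XX RR RR" "(0::nat, 0::nat, 2::nat) \<in> rel_pullback XX RR RR"
    "(0::nat, 0::nat, 6::nat) \<in> rel_pullback XX RR RR"
    by (auto simp: rel_pullback_def RR_def)
  have p1: "p (7, 5, 5) = 7" using a by (auto simp: RR_def)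
  have p2: "p (0, 0, 2) = 2" "p (0, 0, 6) = 6" using b by (auto simp: RR_def)
  have e1: "p (op1 (dsub (dprod XX (dprod XX XX)) (rel_pullback XX RR RR)) (7, 5, 5) (0, 0, 2))
     = op1 XX (p (7, 5, 5)) (p (0, 0, 2))"
    using h m1 unfolding dhom_def by (simp add: dsub_def)
  have e2: "p (op2 (dsub (dprod XX (dprod XX XX)) (rel_pullback XX RR RR)) (7, 5, 5) (0, 0, 6))
     = op2 XX (p (7, 5, 5)) (p (0, 0, 6))"
    using h m1 unfolding dhom_def by (simp add: dsub_def)
  have "p (7, 5, 7) = 1" using e1 p1 p2 by (simp add: dsub_def dprod_def)
  moreover have "p (7, 5, 7) = 3" using e2 p1 p2 by (simp add: dsub_def dprod_def sg_def)
  ultimately show False by simp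
qed

lemma is_dg: "is_digroup XX"
  using grp1_XX grp2_XX by (simp add: is_digroup_def)

theorem proposition3p6:
  shows "\<exists>(X :: nat dgr) R S. is_digroup X \<and> dcongruence X R \<and> dcongruence X S
           \<and> huq_commute X (normal_part X R) (normal_part X S)
           \<and> \<not> smith_commute X R S"
  using is_dg cong_RR huq not_smith by blast

end
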